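(* Let $\mathcal M$ be an o-minimal structure in a language $\mathcal L$ with universe $M$, and $\mathcal N$ an expansion of $\mathcal M$ such that every open definable set is $\mathcal L$-definable and $\mathcal N$ admits a dimension function $\dim$ compatible with $\mathcal M$. Let $F:X\subseteq M^n\to M^m$ be an $\mathcal L$-definable map and $D\subseteq X$ a definable set with $\dim(X\setminus D)<\dim X$, such that the restriction of $F$ to $D$ is injective. Then there is an $\mathcal L$-definable set $Y\subseteq X$ with $\dim(X\setminus Y)<\dim X$ such that the restriction of $F$ to $Y$ is injective.
   Context: "Definable" means definable in $\mathcal N$ with parameters; "$\mathcal L$-definable" means definable in $\mathcal M$ with parameters. A dimension function compatible with $\mathcal M$ is a map $\dim$ from definable sets to $\{-\infty\}\cup\mathbb N$ such that for all definable $X,Y\subseteq M^n$, $a\in M$: (D1) $\dim\{a\}=0$, $\dim M=1$, $\dim X=-\infty$ iff $X=\emptyset$; (D2) $\dim(X\cup Y)=\max\{\dim X,\dim Y\}$; (D3) for a definable family $\{X_t\}_{t\in I}$ of pairwise disjoint sets: (a) each $\{t\in I:\dim X_t=d\}$ is definable; (b) if all $X_t$ have dimension $k$ then $\dim\bigcup_t X_t=\dim I+k$; (D4) definable bijections preserve $\dim$; (D5) on $\mathcal L$-definable sets $\dim$ is the o-minimal dimension; (D6) every definable $f:M^n\to M$ agrees with an $\mathcal L$-definable $F:M^n\to M$ outside a definable set of dimension $<n$. *)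

theory Defs
  imports Main "HOL-Library.Extended_Real"
begin

text \<open>Tuples in M^n are lists of length n. A "structure" on the universe 'a
(van den Dries style) is a family S n of subsets of M^n closed under the usual
operations; this is exactly the collection of sets definable with parameters
in some first-order structure with universe 'a.\<close>

definition is_structure :: "(nat \<Rightarrow> 'a list set set) \<Rightarrow> bool" where
  "is_structure S \<longleftrightarrow>
     (\<forall>n. \<forall>A\<in>S n. A \<subseteq> {x. length x = n}) \<and>
     (\<forall>n. {x. length x = n} \<in> S n) \<and>
     (\<forall>n. \<forall>A\<in>S n. \<forall>B\<in>S n. A \<union> B \<in> S n \<and> A - B \<in> S n) \<and>
     (\<forall>n. \<forall>A\<in>S n. {x @ [y] | x y. x \<in> A} \<in> S (Suc n) \<and> {y # x | x y. x \<in> A} \<in> S (Suc n)) \<and>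
     (\<forall>n i j. i < n \<longrightarrow> j < n \<longrightarrow> {x. length x = n \<and> x ! i = x ! j} \<in> S n) \<and>
     (\<forall>n. \<forall>A\<in>S (Suc n). butlast ` A \<in> S n) \<and>
     (\<forall>a. {[a]} \<in> S 1)"

text \<open>Open intervals with endpoints in M \<union> {-\<infinity>,+\<infinity>} (None = infinite endpoint).\<close>
definition in_ival :: "'a::linorder option \<Rightarrow> 'a option \<Rightarrow> 'a \<Rightarrow> bool" where
  "in_ival l u x \<longleftrightarrow> (\<forall>a. l = Some a \<longrightarrow> a < x) \<and> (\<forall>b. u = Some b \<longrightarrow> x < b)"

definition o_minimal :: "(nat \<Rightarrow> 'a::linorder list set set) \<Rightarrow> bool" where
  "o_minimal S \<longleftrightarrow> is_structure S \<and>
     {[x, y] | x y. x < y} \<in> S 2 \<and>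
     (\<forall>A\<in>S 1. \<exists>P I. finite P \<and> finite I \<and>
        A = {[x] | x. x \<in> P} \<union> {[x] | x. \<exists>(l, u)\<in>I. in_ival l u x})"

definition open_n :: "nat \<Rightarrow> 'a::linorder list set \<Rightarrow> bool" where
  "open_n n U \<longleftrightarrow> (\<forall>x\<in>U. length x = n) \<and>
     (\<forall>x\<in>U. \<exists>ls us. length ls = n \<and> length us = n \<and>
        (\<forall>i<n. in_ival (ls ! i) (us ! i) (x ! i)) \<and>
        {y. length y = n \<and> (\<forall>i<n. in_ival (ls ! i) (us ! i) (y ! i))} \<subseteq> U)"

definition coord_proj :: "nat set \<Rightarrow> 'a list \<Rightarrow> 'a list" where
  "coord_proj J x = map (\<lambda>i. x ! i) (sorted_list_of_set J)"

definition omin_dim :: "nat \<Rightarrow> 'a::linorder list set \<Rightarrow> ereal" where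
  "omin_dim n A = (if A = {} then - \<infinity> else
     ereal (real (Max {card J | J. J \<subseteq> {..<n} \<and>
        (\<exists>U. U \<noteq> {} \<and> open_n (card J) U \<and> U \<subseteq> coord_proj J ` A)})))"

text \<open>Dimension function on the sets T (definable in N) compatible with S
(definable in M). -\<infinity> is the ereal -\<infinity>.\<close>
definition dim_function ::
  "(nat \<Rightarrow> 'a::linorder list set set) \<Rightarrow> (nat \<Rightarrow> 'a list set set) \<Rightarrow> ('a list set \<Rightarrow> ereal) \<Rightarrow> bool" where
  "dim_function S T dm \<longleftrightarrow>
     (\<forall>n. \<forall>X\<in>T n. dm X \<in> {- \<infinity>} \<union> range (\<lambda>k::nat. ereal (real k))) \<and>
     \<comment> \<open>D1\<close>
     (\<forall>a. dm {[a]} = 0) \<and> dm {[x] | x. True} = 1 \<and>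
     (\<forall>n. \<forall>X\<in>T n. dm X = - \<infinity> \<longleftrightarrow> X = {}) \<and>
     \<comment> \<open>D2\<close>
     (\<forall>n. \<forall>X\<in>T n. \<forall>Y\<in>T n. dm (X \<union> Y) = max (dm X) (dm Y)) \<and>
     \<comment> \<open>D3: family X_t = {x. t @ x \<in> Z}, t \<in> I\<close>
     (\<forall>p n I Z. I \<in> T p \<longrightarrow> Z \<in> T (p + n) \<longrightarrow>
        (\<forall>s\<in>I. \<forall>t\<in>I. s \<noteq> t \<longrightarrow>
           {x. length x = n \<and> s @ x \<in> Z} \<inter> {x. length x = n \<and> t @ x \<in> Z} = {}) \<longrightarrow>
        (\<forall>d. {t\<in>I. dm {x. length x = n \<and> t @ x \<in> Z} = d} \<in> T p) \<and>
        (\<forall>k::nat. (\<forall>t\<in>I. dm {x. length x = n \<and> t @ x \<in> Z} = ereal (real k)) \<longrightarrow>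
           dm (\<Union>t\<in>I. {x. length x = n \<and> t @ x \<in> Z}) = dm I + ereal (real k))) \<and>
     \<comment> \<open>D4\<close>
     (\<forall>n m X Y f. X \<in> T n \<longrightarrow> Y \<in> T m \<longrightarrow> (\<forall>x\<in>X. length (f x) = m) \<longrightarrow>
        {x @ f x | x. x \<in> X} \<in> T (n + m) \<longrightarrow> bij_betw f X Y \<longrightarrow> dm X = dm Y) \<and>
     \<comment> \<open>D5\<close>
     (\<forall>n. \<forall>A\<in>S n. dm A = omin_dim n A) \<and>
     \<comment> \<open>D6\<close>
     (\<forall>n f. {x @ [f x] | x. length x = n} \<in> T (Suc n) \<longrightarrow>
        (\<exists>F E. {x @ [F x] | x. length x = n} \<in> S (Suc n) \<and> E \<in> T n \<and>
           dm E < ereal (real n) \<and> (\<forall>x. length x = n \<longrightarrow> x \<notin> E \<longrightarrow> f x = F x)))"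

end

theory Submission
  imports Defs
begin

lemma st_parts:
  assumes "is_structure S"
  shows "\<forall>n. \<forall>A\<in>S n. A \<subseteq> {x. length x = n}"
    and "\<forall>n. {x. length x = n} \<in> S n"
    and "\<forall>n. \<forall>A\<in>S n. \<forall>B\<in>S n. A \<union> B \<in> S n \<and> A - B \<in> S n"
    and "\<forall>n. \<forall>A\<in>S n. {x @ [y] | x y. x \<in> A} \<in> S (Suc n) \<and> {y # x | x y. x \<in> A} \<in> S (Suc n)"
    and "\<forall>n i j. i < n \<longrightarrow> j < n \<longrightarrow> {x. length x = n \<and> x ! i = x ! j} \<in> S n"
    and "\<forall>n. \<forall>A\<in>S (Suc n). butlast ` A \<in> S n"
    and "\<forall>a. {[a]} \<in> S 1"
  using assms unfolding is_structure_def by simp_all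

lemma st_sub: "is_structure S \<Longrightarrow> A \<in> S k \<Longrightarrow> x \<in> A \<Longrightarrow> length x = k"
  using st_parts(1) by blast
lemma st_full: "is_structure S \<Longrightarrow> {x. length x = k} \<in> S k"
  using st_parts(2) by blast
lemma st_Un: "is_structure S \<Longrightarrow> A \<in> S k \<Longrightarrow> B \<in> S k \<Longrightarrow> A \<union> B \<in> S k"
  using st_parts(3) by blast
lemma st_Diff: "is_structure S \<Longrightarrow> A \<in> S k \<Longrightarrow> B \<in> S k \<Longrightarrow> A - B \<in> S k"
  using st_parts(3) by blast
lemma st_Int: "is_structure S \<Longrightarrow> A \<in> S k \<Longrightarrow> B \<in> S k \<Longrightarrow> A \<inter> B \<in> S k"
proof -
  assume a: "is_structure S" "A \<in> S k" "B \<in> S k"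
  have "A \<inter> B = A - (A - B)" by blast
  thus ?thesis using a st_Diff by metis
qed
lemma st_snoc: "is_structure S \<Longrightarrow> A \<in> S k \<Longrightarrow> {x @ [y] | x y. x \<in> A} \<in> S (Suc k)"
  using st_parts(4) by blast
lemma st_cons: "is_structure S \<Longrightarrow> A \<in> S k \<Longrightarrow> {y # x | x y. x \<in> A} \<in> S (Suc k)"
  using st_parts(4) by blast
lemma st_diag: "is_structure S \<Longrightarrow> i < N \<Longrightarrow> j < N \<Longrightarrow> {x. length x = N \<and> x ! i = x ! j} \<in> S N"
  using st_parts(5) by blast
lemma st_butlast: "is_structure S \<Longrightarrow> A \<in> S (Suc k) \<Longrightarrow> butlast ` A \<in> S k"
  using st_parts(6) by blast
lemma st_single1: "is_structure S \<Longrightarrow> {[a]} \<in> S 1"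
  using st_parts(7) by blast

lemma st_app_right:
  assumes S: "is_structure S" and A: "A \<in> S k"
  shows "{x @ y | x y. x \<in> A \<and> length y = j} \<in> S (k + j)"
proof (induction j)
  case 0
  have "{x @ y | x y. x \<in> A \<and> length y = 0} = A" by auto
  then show ?case using A by simp
next
  case (Suc j)
  have "{x @ y | x y. x \<in> A \<and> length y = Suc j} =
        {w @ [c] | w c. w \<in> {x @ y | x y. x \<in> A \<and> length y = j}}"
  proof (intro set_eqI iffI)
    fix z assume "z \<in> {x @ y | x y. x \<in> A \<and> length y = Suc j}"
    then obtain x y where z: "z = x @ y" "x \<in> A" "length y = Suc j" by blast
    then have "y = butlast y @ [last y]" by (metis append_butlast_last_id list.size(3) nat.distinct(1))
    then have "z = (x @ butlast y) @ [last y]" using z by simp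
    moreover have "length (butlast y) = j" using z by simp
    ultimately show "z \<in> {w @ [c] | w c. w \<in> {x @ y | x y. x \<in> A \<and> length y = j}}"
      using z by blast
  next
    fix z assume "z \<in> {w @ [c] | w c. w \<in> {x @ y | x y. x \<in> A \<and> length y = j}}"
    then obtain x y c where "z = (x @ y) @ [c]" "x \<in> A" "length y = j" by blast
    then show "z \<in> {x @ y | x y. x \<in> A \<and> length y = Suc j}"
      by (intro CollectI exI[of _ x] exI[of _ "y @ [c]"]) auto
  qed
  then show ?case using st_snoc[OF S Suc.IH] by simp
qed

lemma st_app_left:
  assumes S: "is_structure S" and A: "A \<in> S k"
  shows "{y @ x | x y. x \<in> A \<and> length y = j} \<in> S (j + k)"
proof (induction j)
  case 0
  have "{y @ x | x y. x \<in> A \<and> length y = 0} = A" by auto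
  then show ?case using A by simp
next
  case (Suc j)
  have "{y @ x | x y. x \<in> A \<and> length y = Suc j} =
        {c # w | w c. w \<in> {y @ x | x y. x \<in> A \<and> length y = j}}"
  proof (intro set_eqI iffI)
    fix z assume "z \<in> {y @ x | x y. x \<in> A \<and> length y = Suc j}"
    then obtain x y where z: "z = y @ x" "x \<in> A" "length y = Suc j" by blast
    then obtain c y' where "y = c # y'" by (cases y) auto
    then show "z \<in> {c # w | w c. w \<in> {y @ x | x y. x \<in> A \<and> length y = j}}"
      using z by auto
  next
    fix z assume "z \<in> {c # w | w c. w \<in> {y @ x | x y. x \<in> A \<and> length y = j}}"
    then obtain x y c where "z = c # (y @ x)" "x \<in> A" "length y = j" by blast
    then show "z \<in> {y @ x | x y. x \<in> A \<and> length y = Suc j}"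
      by (intro CollectI exI[of _ x] exI[of _ "c # y"]) auto
  qed
  then show ?case using st_cons[OF S Suc.IH] by simp
qed

lemma st_take:
  assumes S: "is_structure S"
  shows "A \<in> S (k + j) \<Longrightarrow> take k ` A \<in> S k"
proof (induction j arbitrary: A)
  case 0
  have "take k ` A = id ` A"
    by (rule image_cong[OF refl]) (use st_sub[OF S 0(1)] in simp)
  then have "take k ` A = A" by simp
  then show ?case using 0 by simp
next
  case (Suc j)
  have b: "butlast ` A \<in> S (k + j)" using st_butlast[OF S] Suc.prems by simp
  have "(\<lambda>x. take k (butlast x)) ` A = take k ` A"
    by (rule image_cong[OF refl]) (use st_sub[OF S Suc.prems] in \<open>simp add: butlast_conv_take min_def\<close>)
  then have "take k ` butlast ` A = take k ` A" by (simp add: image_image)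
  then show ?case using Suc.IH[OF b] by simp
qed

lemma st_diags:
  fixes k :: nat
  assumes S: "is_structure S"
  shows "(\<forall>i<k. \<sigma> i < N \<and> \<tau> i < N) \<Longrightarrow> {z. length z = N \<and> (\<forall>i<k. z ! \<sigma> i = z ! \<tau> i)} \<in> S N"
proof (induction k)
  case 0
  then show ?case using st_full[OF S] by simp
next
  case (Suc k)
  have eq: "{z. length z = N \<and> (\<forall>i<Suc k. z ! \<sigma> i = z ! \<tau> i)} =
     {z. length z = N \<and> (\<forall>i<k. z ! \<sigma> i = z ! \<tau> i)} \<inter> {z. length z = N \<and> z ! \<sigma> k = z ! \<tau> k}"
    using less_Suc_eq by auto
  have h1: "{z. length z = N \<and> (\<forall>i<k. z ! \<sigma> i = z ! \<tau> i)} \<in> S N" using Suc by simp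
  have h2: "{z. length z = N \<and> z ! \<sigma> k = z ! \<tau> k} \<in> S N" using st_diag[OF S] Suc.prems by simp
  show ?case unfolding eq by (rule st_Int[OF S h1 h2])
qed

lemma st_pre:
  assumes S: "is_structure S" and A: "A \<in> S k" and sg: "\<forall>i<k. \<sigma> i < N"
  shows "{z. length z = N \<and> map (\<lambda>i. z ! \<sigma> i) [0..<k] \<in> A} \<in> S N"
proof -
  define W where "W = {z @ w | w z. w \<in> A \<and> length z = N} \<inter>
     {u. length u = N + k \<and> (\<forall>i<k. u ! (N + i) = u ! (\<sigma> i))}"
  have sg': "\<forall>i<k. N + i < N + k \<and> \<sigma> i < N + k" using sg by (simp add: trans_less_add1)
  have W: "W \<in> S (N + k)"
    unfolding W_def by (rule st_Int[OF S st_app_left[OF S A, of N] st_diags[OF S sg']])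
  have "take N ` W = {z. length z = N \<and> map (\<lambda>i. z ! \<sigma> i) [0..<k] \<in> A}"
  proof (intro set_eqI iffI)
    fix z assume "z \<in> take N ` W"
    then obtain u where u: "u \<in> W" "z = take N u" by blast
    then obtain z' w where zw: "u = z' @ w" "w \<in> A" "length z' = N"
      and d: "\<forall>i<k. u ! (N + i) = u ! (\<sigma> i)" unfolding W_def by blast
    have lw: "length w = k" using st_sub[OF S A zw(2)] .
    have z: "z = z'" using u zw by simp
    have "map (\<lambda>i. z ! \<sigma> i) [0..<k] = w"
    proof (rule nth_equalityI)
      show "length (map (\<lambda>i. z ! \<sigma> i) [0..<k]) = length w" using lw by simp
      fix i assume "i < length (map (\<lambda>i. z ! \<sigma> i) [0..<k])"
      then have i: "i < k" by simp
      have "w ! i = u ! (N + i)" using zw by (simp add: nth_append)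
      also have "\<dots> = u ! \<sigma> i" using d i by simp
      also have "\<dots> = z ! \<sigma> i" using zw z sg i by (simp add: nth_append)
      finally show "map (\<lambda>i. z ! \<sigma> i) [0..<k] ! i = w ! i" using i by simp
    qed
    then show "z \<in> {z. length z = N \<and> map (\<lambda>i. z ! \<sigma> i) [0..<k] \<in> A}"
      using zw z by simp
  next
    fix z assume z: "z \<in> {z. length z = N \<and> map (\<lambda>i. z ! \<sigma> i) [0..<k] \<in> A}"
    define w where "w = map (\<lambda>i. z ! \<sigma> i) [0..<k]"
    have lz: "length z = N" using z by simp
    have wA: "w \<in> A" using z w_def by simp
    have c1: "z @ w \<in> {z @ w | w z. w \<in> A \<and> length z = N}" using lz wA by blast
    have c2: "\<forall>i<k. (z @ w) ! (N + i) = (z @ w) ! (\<sigma> i)"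
    proof (intro allI impI)
      fix i assume i: "i < k"
      have "(z @ w) ! (N + i) = w ! i" using lz by (simp add: nth_append)
      also have "\<dots> = z ! \<sigma> i" using i by (simp add: w_def)
      also have "\<dots> = (z @ w) ! (\<sigma> i)" using lz sg i by (simp add: nth_append)
      finally show "(z @ w) ! (N + i) = (z @ w) ! (\<sigma> i)" .
    qed
    have "length (z @ w) = N + k" using lz by (simp add: w_def)
    then have "z @ w \<in> W" unfolding W_def using c1 c2 by blast
    then show "z \<in> take N ` W" using z by (intro image_eqI[of _ _ "z @ w"]) auto
  qed
  then show ?thesis using st_take[OF S W] by simp
qed

lemma st_prod:
  assumes S: "is_structure S" and A: "A \<in> S k" and C: "C \<in> S j"
  shows "{x @ y | x y. x \<in> A \<and> y \<in> C} \<in> S (k + j)"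
proof -
  have eq: "{x @ y | x y. x \<in> A \<and> y \<in> C} =
     {x @ y | x y. x \<in> A \<and> length y = j} \<inter> {y @ x | x y. x \<in> C \<and> length y = k}"
  proof (intro set_eqI iffI)
    fix z assume "z \<in> {x @ y | x y. x \<in> A \<and> y \<in> C}"
    then obtain x y where "z = x @ y" "x \<in> A" "y \<in> C" by blast
    moreover have "length x = k" "length y = j" using st_sub[OF S A] st_sub[OF S C] calculation by auto
    ultimately show "z \<in> {x @ y | x y. x \<in> A \<and> length y = j} \<inter> {y @ x | x y. x \<in> C \<and> length y = k}"
      by blast
  next
    fix z assume "z \<in> {x @ y | x y. x \<in> A \<and> length y = j} \<inter> {y @ x | x y. x \<in> C \<and> length y = k}"
    then obtain x y x' y' where a: "z = x @ y" "x \<in> A" "length y = j" "z = y' @ x'" "x' \<in> C" "length y' = k"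
      by blast
    have "length x = k" using st_sub[OF S A a(2)] .
    then have "x = y'" "y = x'" using a by (auto simp: append_eq_append_conv)
    then show "z \<in> {x @ y | x y. x \<in> A \<and> y \<in> C}" using a by blast
  qed
  have h1: "{x @ y | x y. x \<in> A \<and> length y = j} \<in> S (k + j)" using st_app_right[OF S A] .
  have h2: "{y @ x | x y. x \<in> C \<and> length y = k} \<in> S (k + j)" using st_app_left[OF S C, of k] .
  show ?thesis unfolding eq by (rule st_Int[OF S h1 h2])
qed

lemma st_single:
  assumes S: "is_structure S"
  shows "{t} \<in> S (length t)"
proof (induction t)
  case Nil
  have "{x::'a list. length x = 0} = {[]}" by auto
  then show ?case using st_full[OF S, of 0] by simp
next
  case (Cons a t)
  have "{a # t} = {x @ y | x y. x \<in> {[a]} \<and> y \<in> {t}}" by auto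
  then show ?case using st_prod[OF S st_single1[OF S] Cons.IH] by simp
qed

lemma split_len: "length u = a + b \<Longrightarrow> \<exists>x y. u = x @ y \<and> length x = a \<and> length y = b"
  by (rule exI[of _ "take a u"], rule exI[of _ "drop a u"]) simp

lemma st_drop:
  assumes S: "is_structure S" and A: "A \<in> S (p + k)"
  shows "drop p ` A \<in> S k"
proof -
  define \<sigma> where "\<sigma> i = (if i < p then k + i else i - p)" for i
  define V where "V = {z. length z = k + p \<and> map (\<lambda>i. z ! \<sigma> i) [0..<p + k] \<in> A}"
  have V: "V \<in> S (k + p)" unfolding V_def by (rule st_pre[OF S A]) (auto simp: \<sigma>_def)
  have key: "map (\<lambda>i. (y @ x) ! \<sigma> i) [0..<p + k] = x @ y" if "length x = p" "length y = k" for x y :: "'a list"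
  proof (rule nth_equalityI)
    show "length (map (\<lambda>i. (y @ x) ! \<sigma> i) [0..<p + k]) = length (x @ y)" using that by simp
    fix i assume "i < length (map (\<lambda>i. (y @ x) ! \<sigma> i) [0..<p + k])"
    then have "i < p + k" by simp
    then show "map (\<lambda>i. (y @ x) ! \<sigma> i) [0..<p + k] ! i = (x @ y) ! i"
      using that by (auto simp: \<sigma>_def nth_append)
  qed
  have "take k ` V = drop p ` A"
  proof (intro set_eqI iffI)
    fix z assume "z \<in> take k ` V"
    then obtain u where u: "u \<in> V" "z = take k u" by blast
    have "length u = k + p" using u unfolding V_def by simp
    then obtain y x where l: "u = y @ x" "length y = k" "length x = p" using split_len by blast
    have "x @ y \<in> A" using u(1) key[OF l(3,2)] unfolding V_def l(1) by simp
    moreover have "z = drop p (x @ y)" using u(2) l by simp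
    ultimately show "z \<in> drop p ` A" by blast
  next
    fix z assume "z \<in> drop p ` A"
    then obtain a where a: "a \<in> A" "z = drop p a" by blast
    have la: "length a = p + k" using st_sub[OF S A a(1)] .
    then obtain x y where l: "a = x @ y" "length x = p" "length y = k" using split_len by blast
    have "y @ x \<in> V" unfolding V_def using key[OF l(2,3)] l a by simp
    moreover have "z = take k (y @ x)" using a(2) l by simp
    ultimately show "z \<in> take k ` V" by blast
  qed
  then show ?thesis using st_take[OF S V] by simp
qed

lemma st_proj_union:
  assumes S: "is_structure S" and I: "I \<in> S p" and A: "A \<in> S (p + k)"
  shows "(\<Union>t\<in>I. {y. length y = k \<and> t @ y \<in> A}) \<in> S k"
proof -
  define C where "C = A \<inter> {x @ y | x y. x \<in> I \<and> y \<in> {y. length y = k}}"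
  have eq: "(\<Union>t\<in>I. {y. length y = k \<and> t @ y \<in> A}) = drop p ` C"
  proof (intro set_eqI iffI)
    fix z assume "z \<in> (\<Union>t\<in>I. {y. length y = k \<and> t @ y \<in> A})"
    then obtain t where t: "t \<in> I" "length z = k" "t @ z \<in> A" by blast
    have lt: "length t = p" using st_sub[OF S I t(1)] .
    have "t @ z \<in> C" unfolding C_def using t by blast
    moreover have "z = drop p (t @ z)" using lt by simp
    ultimately show "z \<in> drop p ` C" by blast
  next
    fix z assume "z \<in> drop p ` C"
    then obtain x y where xy: "z = drop p (x @ y)" "x @ y \<in> A" "x \<in> I" "length y = k"
      unfolding C_def by blast
    have "length x = p" using st_sub[OF S I xy(3)] .
    then have "z = y" using xy(1) by simp
    then show "z \<in> (\<Union>t\<in>I. {y. length y = k \<and> t @ y \<in> A})" using xy by blast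
  qed
  have "C \<in> S (p + k)" unfolding C_def by (rule st_Int[OF S A st_prod[OF S I st_full[OF S]]])
  then have "drop p ` C \<in> S k" by (rule st_drop[OF S])
  then show ?thesis unfolding eq .
qed

lemma st_fiber:
  assumes S: "is_structure S" and A: "A \<in> S (p + k)" and t: "length t = p"
  shows "{y. length y = k \<and> t @ y \<in> A} \<in> S k"
proof -
  have "{t} \<in> S p" using st_single[OF S, of t] t by simp
  from st_proj_union[OF S this A] show ?thesis by simp
qed

lemma dim_parts1: assumes "dim_function S T dm" shows "\<forall>n. \<forall>X\<in>T n. dm X \<in> {- \<infinity>} \<union> range (\<lambda>k::nat. ereal (real k))"
  using assms unfolding dim_function_def by (elim conjE) assumption

lemma dim_parts2: assumes "dim_function S T dm" shows "\<forall>n. \<forall>X\<in>T n. dm X = - \<infinity> \<longleftrightarrow> X = {}"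
  using assms unfolding dim_function_def by (elim conjE) assumption

lemma dim_parts3: assumes "dim_function S T dm" shows "\<forall>n. \<forall>X\<in>T n. \<forall>Y\<in>T n. dm (X \<union> Y) = max (dm X) (dm Y)"
  using assms unfolding dim_function_def by (elim conjE) assumption

lemma dim_parts4: assumes "dim_function S T dm" shows "\<forall>p n I Z. I \<in> T p \<longrightarrow> Z \<in> T (p + n) \<longrightarrow>
        (\<forall>s\<in>I. \<forall>t\<in>I. s \<noteq> t \<longrightarrow>
           {x. length x = n \<and> s @ x \<in> Z} \<inter> {x. length x = n \<and> t @ x \<in> Z} = {}) \<longrightarrow>
        (\<forall>d. {t\<in>I. dm {x. length x = n \<and> t @ x \<in> Z} = d} \<in> T p) \<and>
        (\<forall>k::nat. (\<forall>t\<in>I. dm {x. length x = n \<and> t @ x \<in> Z} = ereal (real k)) \<longrightarrow>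
           dm (\<Union>t\<in>I. {x. length x = n \<and> t @ x \<in> Z}) = dm I + ereal (real k))"
  using assms unfolding dim_function_def by (elim conjE) assumption

lemma dm_Un: "dim_function S T dm \<Longrightarrow> A \<in> T k \<Longrightarrow> C \<in> T k \<Longrightarrow> dm (A \<union> C) = max (dm A) (dm C)"
  using dim_parts3 by blast

lemma dm_mono:
  assumes dim: "dim_function S T dm" and A: "A \<in> T k" and C: "C \<in> T k" and sub: "A \<subseteq> C"
  shows "dm A \<le> dm C"
proof -
  have "dm (A \<union> C) = max (dm A) (dm C)" using dm_Un[OF dim A C] .
  moreover have "A \<union> C = C" using sub by blast
  moreover have "dm A \<le> max (dm A) (dm C)" by simp
  ultimately show ?thesis by simp
qed

lemma dm_union_le:
  fixes K :: nat
  assumes T: "is_structure T" and dim: "dim_function S T dm"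
    and I: "\<And>k. k \<le> K \<Longrightarrow> I k \<in> T n \<and> dm (I k) \<le> c"
  shows "(\<Union>k\<le>K. I k) \<in> T n \<and> dm (\<Union>k\<le>K. I k) \<le> c"
  using I
proof (induction K)
  case 0
  then show ?case by simp
next
  case (Suc K)
  have h: "(\<Union>k\<le>K. I k) \<in> T n \<and> dm (\<Union>k\<le>K. I k) \<le> c" using Suc by simp
  have e: "(\<Union>k\<le>Suc K. I k) = (\<Union>k\<le>K. I k) \<union> I (Suc K)" by (auto simp: atMost_Suc)
  have i: "I (Suc K) \<in> T n \<and> dm (I (Suc K)) \<le> c" using Suc.prems by simp
  have "dm ((\<Union>k\<le>K. I k) \<union> I (Suc K)) = max (dm (\<Union>k\<le>K. I k)) (dm (I (Suc K)))"
    using dm_Un[OF dim] h i by blast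
  then show ?case using e h i st_Un[OF T] by simp
qed

theorem lemma2p3:
  fixes S T :: "nat \<Rightarrow> 'a::linorder list set set"
    and dm :: "'a list set \<Rightarrow> ereal"
    and F :: "'a list \<Rightarrow> 'a list"
    and X D :: "'a list set" and n m :: nat
  assumes "o_minimal S"
    and "is_structure T"
    and "\<forall>k. S k \<subseteq> T k"
    and "\<forall>k. \<forall>A\<in>T k. open_n k A \<longrightarrow> A \<in> S k"
    and "dim_function S T dm"
    and "X \<in> S n"
    and "\<forall>x\<in>X. length (F x) = m"
    and "{x @ F x | x. x \<in> X} \<in> S (n + m)"
    and "D \<in> T n" and "D \<subseteq> X"
    and "dm (X - D) < dm X"
    and "inj_on F D"
  shows "\<exists>Y\<in>S n. Y \<subseteq> X \<and> dm (X - Y) < dm X \<and> inj_on F Y"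
proof -
  note a = assms
  have sS: "is_structure S" using a(1) unfolding o_minimal_def by (rule conjunct1)
  have sT: "is_structure T" using a(2) .
  have ST: "\<And>k A. A \<in> S k \<Longrightarrow> A \<in> T k" using a(3) by blast
  have dim: "dim_function S T dm" using a(5) .
  have XS: "X \<in> S n" using a(6) .
  have XT: "X \<in> T n" using ST XS .
  have Xlen: "\<And>x. x \<in> X \<Longrightarrow> length x = n" using st_sub[OF sS XS] by blast
  define G where "G = {x @ F x | x. x \<in> X}"
  have GS: "G \<in> S (n + m)" using a(8) G_def by simp
  have Gmem: "x @ u \<in> G \<longleftrightarrow> x \<in> X \<and> u = F x" if "length x = n" for x u
  proof
    assume "x @ u \<in> G"
    then obtain x' where "x @ u = x' @ F x'" "x' \<in> X" unfolding G_def by blast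
    moreover have "length x' = n" using Xlen calculation(2) .
    ultimately show "x \<in> X \<and> u = F x" using that by (auto simp: append_eq_append_conv)
  qed (auto simp: G_def)
  define P where "P = {x @ y | x y. x \<in> X \<and> y \<in> X \<and> F x = F y}"
  define \<sigma>1 where "\<sigma>1 i = (if i < n then i else n + i)" for i
  define \<sigma>2 where "\<sigma>2 i = n + i" for i :: nat
  define W1 where "W1 = {z. length z = n + n + m \<and> map (\<lambda>i. z ! \<sigma>1 i) [0..<n + m] \<in> G}"
  define W2 where "W2 = {z. length z = n + n + m \<and> map (\<lambda>i. z ! \<sigma>2 i) [0..<n + m] \<in> G}"
  have W1: "W1 \<in> S (n + n + m)" unfolding W1_def by (rule st_pre[OF sS GS]) (auto simp: \<sigma>1_def)
  have W2: "W2 \<in> S (n + n + m)" unfolding W2_def by (rule st_pre[OF sS GS]) (auto simp: \<sigma>2_def)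
  have m1: "map (\<lambda>i. (x @ y @ u) ! \<sigma>1 i) [0..<n + m] = x @ u"
    if "length x = n" "length y = n" "length u = m" for x y u :: "'a list"
    by (rule nth_equalityI) (use that in \<open>auto simp: \<sigma>1_def nth_append\<close>)
  have m2: "map (\<lambda>i. (x @ y @ u) ! \<sigma>2 i) [0..<n + m] = y @ u"
    if "length x = n" "length y = n" "length u = m" for x y u :: "'a list"
    by (rule nth_equalityI) (use that in \<open>auto simp: \<sigma>2_def nth_append\<close>)
  have "take (n + n) ` (W1 \<inter> W2) = P"
  proof (intro set_eqI iffI)
    fix z assume "z \<in> take (n + n) ` (W1 \<inter> W2)"
    then obtain w where w: "w \<in> W1" "w \<in> W2" "z = take (n + n) w" by blast
    define x where "x = take n w"
    define y where "y = take n (drop n w)"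
    define u where "u = drop (n + n) w"
    have lw: "length w = n + n + m" using w(1) W1_def by simp
    have l: "length x = n" "length y = n" "length u = m" "w = x @ y @ u"
      using lw unfolding x_def y_def u_def
      by (auto simp: add.assoc[symmetric]) (metis append_take_drop_id drop_drop add.commute)
    have "x @ u \<in> G" "y @ u \<in> G" using w(1,2) m1[OF l(1-3)] m2[OF l(1-3)] l(4)
      unfolding W1_def W2_def by auto
    then have "x \<in> X" "y \<in> X" "F x = F y" using Gmem l by auto
    moreover have "z = x @ y" using w(3) l by simp
    ultimately show "z \<in> P" unfolding P_def by blast
  next
    fix z assume "z \<in> P"
    then obtain x y where xy: "z = x @ y" "x \<in> X" "y \<in> X" "F x = F y" unfolding P_def by blast
    have l: "length x = n" "length y = n" "length (F x) = m" using Xlen xy a(7) by auto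
    have "x @ y @ F x \<in> W1 \<inter> W2" unfolding W1_def W2_def
      using m1[OF l] m2[OF l] l xy Gmem by auto
    then show "z \<in> take (n + n) ` (W1 \<inter> W2)" using xy l by (intro image_eqI[of _ _ "x @ y @ F x"]) auto
  qed
  then have PS: "P \<in> S (n + n)" using st_take[OF sS st_Int[OF sS W1 W2]] by simp
  define Dl where "Dl = {z::'a list. length z = n + n \<and> (\<forall>i<n. z ! i = z ! (n + i))}"
  have DlS: "Dl \<in> S (n + n)" unfolding Dl_def by (rule st_diags[OF sS]) auto
  define B where "B = {x \<in> X. \<exists>y\<in>X. y \<noteq> x \<and> F y = F x}"
  have "take n ` (P - Dl) = B"
  proof (intro set_eqI iffI)
    fix z assume "z \<in> take n ` (P - Dl)"
    then obtain x y where xy: "z = take n (x @ y)" "x \<in> X" "y \<in> X" "F x = F y" "x @ y \<notin> Dl"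
      unfolding P_def by blast
    have l: "length x = n" "length y = n" using Xlen xy by auto
    have "x \<noteq> y" using xy(5) l unfolding Dl_def by (auto simp: nth_append)
    then show "z \<in> B" using xy l unfolding B_def by auto
  next
    fix z assume "z \<in> B"
    then obtain y where y: "z \<in> X" "y \<in> X" "y \<noteq> z" "F y = F z" unfolding B_def by blast
    have l: "length z = n" "length y = n" using Xlen y by auto
    have "z @ y \<notin> Dl"
    proof
      assume "z @ y \<in> Dl"
      then have "\<forall>i<n. z ! i = y ! i" unfolding Dl_def using l by (auto simp: nth_append)
      then have "z = y" using l by (simp add: nth_equalityI)
      then show False using y by simp
    qed
    moreover have "z @ y \<in> P" unfolding P_def using y(1,2) y(4)[symmetric] by blast
    ultimately show "z \<in> take n ` (P - Dl)" using l by (intro image_eqI[of _ _ "z @ y"]) auto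
  qed
  then have BS: "B \<in> S n" using st_take[OF sS st_Diff[OF sS PS DlS]] by simp
  have BT: "B \<in> T n" using ST BS .
  define Y where "Y = X - B"
  have YS: "Y \<in> S n" unfolding Y_def using st_Diff[OF sS XS BS] .
  have inj: "inj_on F Y" unfolding Y_def B_def inj_on_def by auto
  have XY: "X - Y = B" unfolding Y_def B_def by auto
  have XDT: "X - D \<in> T n" using st_Diff[OF sT XT a(9)] .
  define B' where "B' = B \<inter> D"
  have B'T: "B' \<in> T n" unfolding B'_def using st_Int[OF sT BT a(9)] .
  define Z where "Z = P \<inter> {x @ y | x y. x \<in> B' \<and> y \<in> X - D}"
  have ZT: "Z \<in> T (n + n)" unfolding Z_def using st_Int[OF sT ST[OF PS] st_prod[OF sT B'T XDT]] .
  define fib where "fib t = {y. length y = n \<and> t @ y \<in> Z}" for t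
  have fibeq: "fib t = {y \<in> X - D. F y = F t}" if t: "t \<in> B'" for t
  proof (intro set_eqI iffI)
    have lt: "length t = n" using t Xlen unfolding B'_def B_def by auto
    fix y assume "y \<in> fib t"
    then have y: "length y = n" "t @ y \<in> P" "t @ y \<in> {x @ y | x y. x \<in> B' \<and> y \<in> X - D}"
      unfolding fib_def Z_def by auto
    from y(2) obtain x1 y1 where "t @ y = x1 @ y1" "x1 \<in> X" "y1 \<in> X" "F x1 = F y1" unfolding P_def by blast
    moreover have "length x1 = n" using Xlen calculation(2) .
    ultimately have "y \<in> X" "F y = F t" using lt by (auto simp: append_eq_append_conv)
    moreover from y(3) obtain x2 y2 where "t @ y = x2 @ y2" "x2 \<in> B'" "y2 \<in> X - D" by blast
    moreover have "length x2 = n" using Xlen calculation(4) unfolding B'_def B_def by auto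
    ultimately show "y \<in> {y \<in> X - D. F y = F t}" using lt by (auto simp: append_eq_append_conv)
  next
    have lt: "length t = n" using t Xlen unfolding B'_def B_def by auto
    fix y assume y: "y \<in> {y \<in> X - D. F y = F t}"
    have tX: "t \<in> X" using t unfolding B'_def B_def by blast
    have "t @ y \<in> P" unfolding P_def using tX y by force
    moreover have "t @ y \<in> {x @ y | x y. x \<in> B' \<and> y \<in> X - D}" using t y by blast
    moreover have "length y = n" using y Xlen by blast
    ultimately show "y \<in> fib t" unfolding fib_def Z_def by blast
  qed
  have fibne: "fib t \<noteq> {}" if t: "t \<in> B'" for t
  proof -
    from t obtain y where y: "y \<in> X" "y \<noteq> t" "F y = F t" "t \<in> D" unfolding B'_def B_def by blast
    have "y \<notin> D" using y a(12) unfolding inj_on_def by blast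
    then show ?thesis using fibeq[OF t] y by auto
  qed
  have disj: "\<forall>s\<in>I. \<forall>t\<in>I. s \<noteq> t \<longrightarrow> fib s \<inter> fib t = {}" if "I \<subseteq> B'" for I
  proof (intro ballI impI)
    fix s t assume st: "s \<in> I" "t \<in> I" "s \<noteq> t"
    then have "s \<in> D" "t \<in> D" "s \<in> B'" "t \<in> B'" using that unfolding B'_def by auto
    then show "fib s \<inter> fib t = {}" using fibeq st a(12) unfolding inj_on_def by auto
  qed
  have fibT: "fib t \<in> T n" if "t \<in> B'" for t
  proof -
    have "length t = n" using that Xlen unfolding B'_def B_def by auto
    then show ?thesis unfolding fib_def using st_fiber[OF sT ZT] by simp
  qed
  have fible: "dm (fib t) \<le> dm (X - D)" if "t \<in> B'" for t
    using dm_mono[OF dim fibT[OF that] XDT] fibeq[OF that] by auto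
  have dvals: "\<And>k A. A \<in> T k \<Longrightarrow> dm A \<in> {- \<infinity>} \<union> range (\<lambda>k::nat. ereal (real k))"
    using dim_parts1[OF dim] by blast
  have dempty: "\<And>k A. A \<in> T k \<Longrightarrow> dm A = - \<infinity> \<longleftrightarrow> A = {}"
    using dim_parts2[OF dim] by blast
  have D3: "\<forall>p n I Z. I \<in> T p \<longrightarrow> Z \<in> T (p + n) \<longrightarrow>
        (\<forall>s\<in>I. \<forall>t\<in>I. s \<noteq> t \<longrightarrow>
           {x. length x = n \<and> s @ x \<in> Z} \<inter> {x. length x = n \<and> t @ x \<in> Z} = {}) \<longrightarrow>
        (\<forall>d. {t\<in>I. dm {x. length x = n \<and> t @ x \<in> Z} = d} \<in> T p) \<and>
        (\<forall>k::nat. (\<forall>t\<in>I. dm {x. length x = n \<and> t @ x \<in> Z} = ereal (real k)) \<longrightarrow>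
           dm (\<Union>t\<in>I. {x. length x = n \<and> t @ x \<in> Z}) = dm I + ereal (real k))"
    using dim_parts4[OF dim] .
  have B'le: "dm B' \<le> dm (X - D)"
  proof (cases "B' = {}")
    case True
    then show ?thesis using dempty[OF B'T] by simp
  next
    case False
    then obtain t0 where t0: "t0 \<in> B'" by blast
    have "X - D \<noteq> {}" using fibne[OF t0] fibeq[OF t0] by auto
    then have "dm (X - D) \<noteq> - \<infinity>" using dempty[OF XDT] by simp
    then obtain K :: nat where K: "dm (X - D) = ereal (real K)" using dvals[OF XDT] by auto
    define I where "I k = {t \<in> B'. dm (fib t) = ereal (real k)}" for k :: nat
    have D3B: "(\<forall>d. {t\<in>J. dm (fib t) = d} \<in> T n) \<and>
        (\<forall>k::nat. (\<forall>t\<in>J. dm (fib t) = ereal (real k)) \<longrightarrow>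
           dm (\<Union>t\<in>J. fib t) = dm J + ereal (real k))" if "J \<in> T n" "J \<subseteq> B'" for J
      using D3[rule_format, OF that(1) ZT] disj[OF that(2)] unfolding fib_def by blast
    have IT: "I k \<in> T n" for k unfolding I_def using D3B[OF B'T] by blast
    have Ile: "dm (I k) \<le> dm (X - D)" for k
    proof -
      have sub: "I k \<subseteq> B'" unfolding I_def by blast
      have eq: "dm (\<Union>t\<in>I k. fib t) = dm (I k) + ereal (real k)"
        using D3B[OF IT sub] unfolding I_def by blast
      have "(\<Union>t\<in>I k. fib t) \<in> T n" unfolding fib_def using st_proj_union[OF sT IT ZT] .
      moreover have "(\<Union>t\<in>I k. fib t) \<subseteq> X - D" using fibeq sub by blast
      ultimately have "dm (\<Union>t\<in>I k. fib t) \<le> dm (X - D)" using dm_mono[OF dim _ XDT] by blast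
      moreover have "dm (I k) \<le> dm (I k) + ereal (real k)" by (rule ereal_le_add_self) simp
      ultimately show ?thesis using eq by simp
    qed
    have cover: "B' = (\<Union>k\<le>K. I k)"
    proof (intro set_eqI iffI)
      fix t assume t: "t \<in> B'"
      have "dm (fib t) \<noteq> - \<infinity>" using dempty[OF fibT[OF t]] fibne[OF t] by simp
      then obtain k :: nat where k: "dm (fib t) = ereal (real k)" using dvals[OF fibT[OF t]] by auto
      then have "k \<le> K" using fible[OF t] K by simp
      then show "t \<in> (\<Union>k\<le>K. I k)" using t k unfolding I_def by blast
    qed (auto simp: I_def)
    show ?thesis using dm_union_le[OF sT dim, of K I n "dm (X - D)"] IT Ile cover by simp
  qed
  have "B \<subseteq> (X - D) \<union> B'" unfolding B'_def B_def by blast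
  then have "dm B \<le> dm ((X - D) \<union> B')" using dm_mono[OF dim BT st_Un[OF sT XDT B'T]] by blast
  also have "\<dots> = max (dm (X - D)) (dm B')" using dm_Un[OF dim XDT B'T] .
  also have "\<dots> = dm (X - D)" using B'le by simp
  finally have "dm B < dm X" using a(11) by simp
  then show ?thesis using YS inj XY Y_def by auto
qed

end
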